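(* Let $G$ be a planar PCC graph and let $\sigma$ be a face of $G$ such that some vertex occurs more than once in the boundary walk of $\sigma$ (i.e. the multiset $V(\sigma)$ of boundary vertices is not a set). Then $7\le|\sigma|\le 11$. The same conclusion holds if some edge occurs more than once in the boundary walk of $\sigma$ (i.e. the multiset $E(\sigma)$ of boundary edges is not a set).
   Context: $G$ is a finite simple connected graph 2-cell embedded in the sphere. For a face $\sigma$, $V(\sigma)$ and $E(\sigma)$ are the multisets of vertices and edges traversed by the boundary walk of $\sigma$, and $|\sigma|$ is its length. For a vertex $v$, $F(v)$ is the multiset of faces incident to $v$ (one per corner) and $K(v)=1-\frac{\deg(v)}{2}+\sum_{\sigma\in F(v)}\frac1{|\sigma|}$. A prism (resp. antiprism) of order $N$ is the planar graph with $2N$ vertices, two $N$-faces and $N$ quadrilaterals (resp. $2N$ triangles), each vertex incident to two quadrilaterals and one $N$-face (resp. three triangles and one $N$-face). A planar PCC graph is such a $G$ with $K(v)>0$, $\deg(v)\ge 3$ for all $v$, not a prism or antiprism. *)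

theory Defs
  imports Complex_Main "HOL-Library.Multiset"
begin

text \<open>The rotation system encodes a 2-cell embedding in an orientable surface; the
  surface is the sphere iff Euler's formula V - E + F = 2 holds.\<close>

definition simple_graph :: "'a set \<Rightarrow> ('a \<Rightarrow> 'a \<Rightarrow> bool) \<Rightarrow> bool" where
  "simple_graph V E \<longleftrightarrow> finite V \<and> (\<forall>u v. E u v \<longrightarrow> u \<in> V \<and> v \<in> V)
     \<and> (\<forall>u v. E u v \<longleftrightarrow> E v u) \<and> (\<forall>u. \<not> E u u)"

definition graph_connected :: "'a set \<Rightarrow> ('a \<Rightarrow> 'a \<Rightarrow> bool) \<Rightarrow> bool" where
  "graph_connected V E \<longleftrightarrow> (\<forall>u\<in>V. \<forall>v\<in>V. E\<^sup>*\<^sup>* u v)"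

definition nbrs :: "('a \<Rightarrow> 'a \<Rightarrow> bool) \<Rightarrow> 'a \<Rightarrow> 'a set" where
  "nbrs E v = {w. E v w}"

definition deg :: "('a \<Rightarrow> 'a \<Rightarrow> bool) \<Rightarrow> 'a \<Rightarrow> nat" where
  "deg E v = card (nbrs E v)"

definition edges :: "('a \<Rightarrow> 'a \<Rightarrow> bool) \<Rightarrow> 'a set set" where
  "edges E = {{u, v} | u v. E u v}"

definition darts :: "('a \<Rightarrow> 'a \<Rightarrow> bool) \<Rightarrow> ('a \<times> 'a) set" where
  "darts E = {(u, v). E u v}"

definition rotation_system :: "'a set \<Rightarrow> ('a \<Rightarrow> 'a \<Rightarrow> bool) \<Rightarrow> ('a \<Rightarrow> 'a \<Rightarrow> 'a) \<Rightarrow> bool" where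
  "rotation_system V E rot \<longleftrightarrow> (\<forall>v\<in>V. bij_betw (rot v) (nbrs E v) (nbrs E v)
     \<and> (\<forall>w\<in>nbrs E v. \<forall>w'\<in>nbrs E v. \<exists>k. (rot v ^^ k) w = w'))"

text \<open>Face tracing: after traversing dart (u,v), leave v along the dart to the
  neighbour following u in the rotation at v.\<close>
definition fnext :: "('a \<Rightarrow> 'a \<Rightarrow> 'a) \<Rightarrow> 'a \<times> 'a \<Rightarrow> 'a \<times> 'a" where
  "fnext rot d = (snd d, rot (snd d) (fst d))"

text \<open>The face containing dart d: the set of darts on its boundary walk
  (each dart of the walk occurs exactly once).\<close>
definition face_of :: "('a \<Rightarrow> 'a \<Rightarrow> 'a) \<Rightarrow> 'a \<times> 'a \<Rightarrow> ('a \<times> 'a) set" where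
  "face_of rot d = range (\<lambda>k. (fnext rot ^^ k) d)"

definition faces :: "('a \<Rightarrow> 'a \<Rightarrow> bool) \<Rightarrow> ('a \<Rightarrow> 'a \<Rightarrow> 'a) \<Rightarrow> ('a \<times> 'a) set set" where
  "faces E rot = face_of rot ` darts E"

definition face_len :: "('a \<times> 'a) set \<Rightarrow> nat" where
  "face_len f = card f"

definition face_verts :: "('a \<times> 'a) set \<Rightarrow> 'a multiset" where
  "face_verts f = image_mset fst (mset_set f)"

definition face_edges :: "('a \<times> 'a) set \<Rightarrow> 'a set multiset" where
  "face_edges f = image_mset (\<lambda>(u, v). {u, v}) (mset_set f)"

definition is_set_mset :: "'b multiset \<Rightarrow> bool" where
  "is_set_mset M \<longleftrightarrow> (\<forall>x. count M x \<le> 1)"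

definition plane_graph :: "'a set \<Rightarrow> ('a \<Rightarrow> 'a \<Rightarrow> bool) \<Rightarrow> ('a \<Rightarrow> 'a \<Rightarrow> 'a) \<Rightarrow> bool" where
  "plane_graph V E rot \<longleftrightarrow> simple_graph V E \<and> graph_connected V E \<and> rotation_system V E rot
     \<and> int (card V) - int (card (edges E)) + int (card (faces E rot)) = 2"

text \<open>Corners at v correspond bijectively to darts (v,w) leaving v, each lying in the
  face of that corner; so F(v) is the multiset of faces face_of (v,w), w a neighbour.\<close>
definition corners :: "('a \<Rightarrow> 'a \<Rightarrow> bool) \<Rightarrow> ('a \<Rightarrow> 'a \<Rightarrow> 'a) \<Rightarrow> 'a \<Rightarrow> ('a \<times> 'a) set multiset" where
  "corners E rot v = image_mset (\<lambda>w. face_of rot (v, w)) (mset_set (nbrs E v))"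

definition curv :: "('a \<Rightarrow> 'a \<Rightarrow> bool) \<Rightarrow> ('a \<Rightarrow> 'a \<Rightarrow> 'a) \<Rightarrow> 'a \<Rightarrow> real" where
  "curv E rot v = 1 - real (deg E v) / 2
     + (\<Sum>\<^sub># (image_mset (\<lambda>f. 1 / real (face_len f)) (corners E rot v)))"

text \<open>Prism and antiprism graphs of order N on vertices 0..2N-1
  (outer cycle 0..N-1, inner cycle N..2N-1).\<close>
definition cyc_adj :: "nat \<Rightarrow> nat \<Rightarrow> nat \<Rightarrow> bool" where
  "cyc_adj N i j \<longleftrightarrow> i < N \<and> j < N \<and> (j = (i + 1) mod N \<or> i = (j + 1) mod N)"

definition prism_adj :: "nat \<Rightarrow> nat \<Rightarrow> nat \<Rightarrow> bool" where
  "prism_adj N i j \<longleftrightarrow> cyc_adj N i j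
     \<or> (N \<le> i \<and> N \<le> j \<and> cyc_adj N (i - N) (j - N))
     \<or> (i < N \<and> j = i + N) \<or> (j < N \<and> i = j + N)"

definition antiprism_adj :: "nat \<Rightarrow> nat \<Rightarrow> nat \<Rightarrow> bool" where
  "antiprism_adj N i j \<longleftrightarrow> cyc_adj N i j
     \<or> (N \<le> i \<and> N \<le> j \<and> cyc_adj N (i - N) (j - N))
     \<or> (i < N \<and> (j = i + N \<or> j = (i + 1) mod N + N))
     \<or> (j < N \<and> (i = j + N \<or> i = (j + 1) mod N + N))"

definition is_prism :: "'a set \<Rightarrow> ('a \<Rightarrow> 'a \<Rightarrow> bool) \<Rightarrow> bool" where
  "is_prism V E \<longleftrightarrow> (\<exists>N f. N \<ge> 3 \<and> bij_betw f V {..<2 * N}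
     \<and> (\<forall>u\<in>V. \<forall>v\<in>V. E u v \<longleftrightarrow> prism_adj N (f u) (f v)))"

definition is_antiprism :: "'a set \<Rightarrow> ('a \<Rightarrow> 'a \<Rightarrow> bool) \<Rightarrow> bool" where
  "is_antiprism V E \<longleftrightarrow> (\<exists>N f. N \<ge> 3 \<and> bij_betw f V {..<2 * N}
     \<and> (\<forall>u\<in>V. \<forall>v\<in>V. E u v \<longleftrightarrow> antiprism_adj N (f u) (f v)))"

definition planar_PCC :: "'a set \<Rightarrow> ('a \<Rightarrow> 'a \<Rightarrow> bool) \<Rightarrow> ('a \<Rightarrow> 'a \<Rightarrow> 'a) \<Rightarrow> bool" where
  "planar_PCC V E rot \<longleftrightarrow> plane_graph V E rot
     \<and> (\<forall>v\<in>V. curv E rot v > 0 \<and> deg E v \<ge> 3)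
     \<and> \<not> is_prism V E \<and> \<not> is_antiprism V E"

end

theory Submission
  imports Defs
begin

locale rsys =
  fixes V :: "'a set" and E :: "'a \<Rightarrow> 'a \<Rightarrow> bool" and rot :: "'a \<Rightarrow> 'a \<Rightarrow> 'a"
  assumes sg: "simple_graph V E" and rs: "rotation_system V E rot"
    and deg3: "\<forall>v\<in>V. deg E v \<ge> 3"
begin

abbreviation f where "f \<equiv> fnext rot"

lemma symE: "E u v \<Longrightarrow> E v u" using sg unfolding simple_graph_def by blast
lemma inV: "E u v \<Longrightarrow> u \<in> V \<and> v \<in> V" using sg unfolding simple_graph_def by blast
lemma irr: "\<not> E u u" using sg unfolding simple_graph_def by blast
lemma finV: "finite V" using sg unfolding simple_graph_def by blast

lemma fixed_contra:
  assumes "E v x" "rot v x = x" shows False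
proof -
  have v: "v \<in> V" using inV assms(1) by blast
  have x: "x \<in> nbrs E v" using assms(1) by (simp add: nbrs_def)
  have it: "(rot v ^^ k) x = x" for k by (induction k) (auto simp: assms(2))
  have "\<forall>y\<in>nbrs E v. \<exists>k. (rot v ^^ k) x = y" using rs v x unfolding rotation_system_def by blast
  then have "nbrs E v \<subseteq> {x}" using it by auto
  then have "card (nbrs E v) \<le> card {x}" by (intro card_mono) simp_all
  then have "card (nbrs E v) \<le> 1" by simp
  then show False using deg3 v by (auto simp: deg_def)
qed

lemma dart_f: "d \<in> darts E \<Longrightarrow> f d \<in> darts E"
proof -
  assume "d \<in> darts E"
  then obtain u w where d: "d = (u, w)" "E u w" by (auto simp: darts_def)
  have w: "w \<in> V" using inV d by blast
  have u: "u \<in> nbrs E w" using symE d by (simp add: nbrs_def)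
  have "rot w u \<in> nbrs E w" using rs w u unfolding rotation_system_def by (meson bij_betw_apply)
  then show ?thesis using d by (simp add: fnext_def darts_def nbrs_def)
qed

lemma dart_fk: "d \<in> darts E \<Longrightarrow> (f ^^ k) d \<in> darts E"
  by (induction k) (auto intro: dart_f)

lemma f_inj: "inj_on f (darts E)"
proof (rule inj_onI)
  fix x y assume x: "x \<in> darts E" and y: "y \<in> darts E" and eq: "f x = f y"
  obtain u w where xd: "x = (u, w)" "E u w" using x by (auto simp: darts_def)
  obtain u' w' where yd: "y = (u', w')" "E u' w'" using y by (auto simp: darts_def)
  have ww: "w = w'" and rr: "rot w u = rot w u'" using eq xd yd by (auto simp: fnext_def)
  have w: "w \<in> V" using inV xd by blast
  have "inj_on (rot w) (nbrs E w)" using rs w unfolding rotation_system_def by (meson bij_betw_imp_inj_on)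
  moreover have "u \<in> nbrs E w" "u' \<in> nbrs E w" using symE xd yd ww by (auto simp: nbrs_def)
  ultimately have "u = u'" using rr by (meson inj_onD)
  then show "x = y" using xd yd ww by simp
qed

lemma fk_cancel: "x \<in> darts E \<Longrightarrow> y \<in> darts E \<Longrightarrow> (f ^^ k) x = (f ^^ k) y \<Longrightarrow> x = y"
proof (induction k arbitrary: x y)
  case 0 then show ?case by simp
next
  case (Suc k)
  have "(f ^^ k) (f x) = (f ^^ k) (f y)" using Suc.prems(3) by (simp add: funpow_swap1)
  then have "f x = f y" using Suc.IH dart_f Suc.prems by blast
  then show ?case using f_inj Suc.prems by (meson inj_onD)
qed

lemma finite_darts: "finite (darts E)"
proof -
  have "darts E \<subseteq> V \<times> V" using inV by (auto simp: darts_def)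
  then show ?thesis using finV finite_subset by blast
qed

lemma periodic: assumes "d \<in> darts E" shows "\<exists>p>0. (f ^^ p) d = d"
proof -
  have "range (\<lambda>k. (f ^^ k) d) \<subseteq> darts E" using dart_fk assms by blast
  then have "finite (range (\<lambda>k. (f ^^ k) d))" using finite_darts finite_subset by blast
  then have "\<not> inj (\<lambda>k. (f ^^ k) d)" using finite_imageD infinite_UNIV_nat by blast
  then obtain i' j' where ij': "i' \<noteq> j'" "(f ^^ i') d = (f ^^ j') d"
    unfolding inj_def by blast
  define i where "i = min i' j'"
  define j where "j = max i' j'"
  have ij: "i < j" "(f ^^ i) d = (f ^^ j) d" using ij' unfolding i_def j_def
    by (auto simp: min_def max_def)
  have jj: "j = i + (j - i)" using ij(1) by simp
  have "(f ^^ j) d = (f ^^ (i + (j - i))) d" using jj by simp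
  also have "\<dots> = (f ^^ i) ((f ^^ (j - i)) d)" by (simp only: funpow_add comp_apply)
  finally have "(f ^^ j) d = (f ^^ i) ((f ^^ (j - i)) d)" .
  then have "(f ^^ i) ((f ^^ (j - i)) d) = (f ^^ i) d" using ij by simp
  then have "(f ^^ (j - i)) d = d" using fk_cancel dart_fk assms by blast
  then show ?thesis using ij(1) by (intro exI[of _ "j - i"]) simp
qed

definition per where "per d = (LEAST p. 0 < p \<and> (f ^^ p) d = d)"

lemma per: "d \<in> darts E \<Longrightarrow> 0 < per d \<and> (f ^^ per d) d = d"
  unfolding per_def using periodic by (rule LeastI_ex) 

lemma per_min: "0 < q \<Longrightarrow> q < per d \<Longrightarrow> (f ^^ q) d \<noteq> d"
  unfolding per_def using not_less_Least by blast

lemma per_mod: "d \<in> darts E \<Longrightarrow> (f ^^ k) d = (f ^^ (k mod per d)) d"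
  using per funpow_mod_eq by metis

lemma face_eq: "d \<in> darts E \<Longrightarrow> face_of rot d = (\<lambda>k. (f ^^ k) d) ` {..<per d}"
  unfolding face_of_def
proof
  assume d: "d \<in> darts E"
  show "range (\<lambda>k. (f ^^ k) d) \<subseteq> (\<lambda>k. (f ^^ k) d) ` {..<per d}"
  proof
    fix x assume "x \<in> range (\<lambda>k. (f ^^ k) d)"
    then obtain k where "x = (f ^^ k) d" by blast
    then have "x = (f ^^ (k mod per d)) d" using per_mod d by metis
    moreover have "k mod per d < per d" using per d by simp
    ultimately show "x \<in> (\<lambda>k. (f ^^ k) d) ` {..<per d}" by blast
  qed
qed auto

lemma inj_per: assumes d: "d \<in> darts E" shows "inj_on (\<lambda>k. (f ^^ k) d) {..<per d}"
proof -
  have "(f ^^ i) d \<noteq> (f ^^ j) d" if ij: "i < j" "j < per d" for i j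
  proof
    assume eq: "(f ^^ i) d = (f ^^ j) d"
    have jj: "j = i + (j - i)" using ij(1) by simp
    have "(f ^^ j) d = (f ^^ (i + (j - i))) d" using jj by simp
    also have "\<dots> = (f ^^ i) ((f ^^ (j - i)) d)" by (simp only: funpow_add comp_apply)
    finally have "(f ^^ j) d = (f ^^ i) ((f ^^ (j - i)) d)" .
    then have "(f ^^ i) ((f ^^ (j - i)) d) = (f ^^ i) d" using eq by simp
    then have "(f ^^ (j - i)) d = d" using fk_cancel dart_fk d by blast
    then show False using per_min[of "j - i" d] ij by simp
  qed
  then show ?thesis unfolding inj_on_def by (metis lessThan_iff nat_neq_iff)
qed

lemma card_face: "d \<in> darts E \<Longrightarrow> card (face_of rot d) = per d"
  using face_eq inj_per by (simp add: card_image)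

lemma face_sub: "d \<in> darts E \<Longrightarrow> face_of rot d \<subseteq> darts E"
  unfolding face_of_def using dart_fk by blast

lemma face_same: assumes d: "d \<in> darts E" and d': "d' \<in> face_of rot d"
  shows "face_of rot d' = face_of rot d"
proof -
  obtain k where k: "d' = (f ^^ k) d" using d' by (auto simp: face_of_def)
  have a: "(f ^^ m) d' = (f ^^ (m + k)) d" for m using k by (simp add: funpow_add)
  have "face_of rot d' \<subseteq> face_of rot d" unfolding face_of_def using a by auto
  moreover have "face_of rot d \<subseteq> face_of rot d'"
  proof
    fix x assume "x \<in> face_of rot d"
    then obtain m where m: "x = (f ^^ m) d" by (auto simp: face_of_def)
    define p where "p = per d"
    have p: "p > 0" using per d p_def by blast
    have "1 * k \<le> p * k" using p by (intro mult_le_mono1) simp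
    then have "k \<le> p * k" by (simp only: mult_1)
    then have "k \<le> m + p * k" by (rule trans_le_add2)
    then have "(m + p * k - k) + k = m + p * k" by (rule le_add_diff_inverse2)
    then have "(f ^^ (m + p * k - k)) d' = (f ^^ (m + p * k)) d" using a by simp
    also have "\<dots> = (f ^^ ((m + p * k) mod p)) d" using per_mod d p_def by metis
    also have "\<dots> = (f ^^ (m mod p)) d" by simp
    also have "\<dots> = x" using per_mod d p_def m by metis
    finally show "x \<in> face_of rot d'" unfolding face_of_def by (metis rangeI)
  qed
  ultimately show ?thesis by blast
qed

lemma per_ge3: assumes d: "d \<in> darts E" shows "per d \<ge> 3"
proof (rule ccontr)
  assume "\<not> 3 \<le> per d"
  moreover have "per d > 0" using per d by blast
  ultimately have "per d = 1 \<or> per d = 2" by linarith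
  moreover obtain u w where dd: "d = (u, w)" "E u w" using d by (auto simp: darts_def)
  moreover have "(f ^^ per d) d = d" using per d by blast
  ultimately show False
  proof (elim disjE)
    assume "per d = 1" "(f ^^ per d) d = d"
    then show False using dd irr by (auto simp: fnext_def)
  next
    assume "per d = 2" "(f ^^ per d) d = d"
    then have "rot w u = u" using dd by (auto simp: fnext_def numeral_2_eq_2)
    then show False using fixed_contra symE dd by blast
  qed
qed

lemma DE: "d \<in> darts E \<Longrightarrow> E (fst d) (snd d)" by (auto simp: darts_def)

lemma curv_bound:
  assumes cv0: "curv E rot v > 0" and va: "E v a" and vc: "E v c" and ac: "a \<noteq> c"
    and fc: "face_of rot (v, c) = face_of rot (v, a)"
  shows "(real (deg E v) - 2) * real (per (v, a)) < 12"
proof -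
  let ?N = "nbrs E v"
  have v: "v \<in> V" using inV va by blast
  have finN: "finite ?N"
  proof -
    have "?N \<subseteq> V" using inV by (auto simp: nbrs_def)
    then show ?thesis using finV finite_subset by blast
  qed
  define L where "L w = real (face_len (face_of rot (v, w)))" for w
  have cv: "curv E rot v = 1 - real (deg E v) / 2 + (\<Sum>w\<in>?N. 1 / L w)"
    unfolding curv_def corners_def L_def by (simp add: sum_unfold_sum_mset multiset.map_comp comp_def)
  have Lge: "L w \<ge> 3" if "w \<in> ?N" for w
  proof -
    have "(v, w) \<in> darts E" using that by (simp add: nbrs_def darts_def)
    then show ?thesis unfolding L_def face_len_def using card_face per_ge3 by simp
  qed
  define s where "s = real (per (v, a))"
  have Da: "(v, a) \<in> darts E" using va by (simp add: darts_def)
  have s3: "s \<ge> 3" using per_ge3 Da s_def by simp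
  have La: "L a = s" "L c = s" unfolding L_def face_len_def s_def using card_face Da fc by auto
  have sub: "{a, c} \<subseteq> ?N" using va vc by (simp add: nbrs_def)
  have "(\<Sum>w\<in>?N. 1 / L w) = (\<Sum>w\<in>?N - {a, c}. 1 / L w) + (\<Sum>w\<in>{a, c}. 1 / L w)"
    using sum.subset_diff[OF sub finN] by simp
  also have "(\<Sum>w\<in>{a, c}. 1 / L w) = 2 / s" using ac La by simp
  also have "(\<Sum>w\<in>?N - {a, c}. 1 / L w) \<le> real (card (?N - {a, c})) * (1 / 3)"
    by (rule sum_bounded_above) (use Lge in \<open>auto simp: divide_simps\<close>)
  also have "card (?N - {a, c}) = deg E v - 2" unfolding deg_def
    using card_Diff_subset[OF _ sub] finN sub ac by (simp add: finite_subset)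
  finally have sm: "(\<Sum>w\<in>?N. 1 / L w) \<le> real (deg E v - 2) * (1 / 3) + 2 / s" by simp
  have d3: "deg E v \<ge> 3" using deg3 v by blast
  then have rd: "real (deg E v - 2) = real (deg E v) - 2" by simp
  have h: "0 < 1 - real (deg E v) / 2 + (real (deg E v) - 2) / 3 + 2 / s"
    using cv0 cv sm rd by simp
  have "0 < s * (1 - real (deg E v) / 2 + (real (deg E v) - 2) / 3 + 2 / s)"
    using h s3 by simp
  then have "0 < s - s * real (deg E v) / 2 + s * (real (deg E v) - 2) / 3 + 2"
    using s3 by (simp add: algebra_simps)
  then have "0 < s - s * real (deg E v) / 2 + (s * real (deg E v) - s * 2) / 3 + 2"
    by (simp only: right_diff_distrib)
  then have "0 < 2 * s - s * real (deg E v) + 12" by (simp add: field_simps)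
  moreover have "(real (deg E v) - 2) * s = s * real (deg E v) - 2 * s" by (simp add: algebra_simps)
  ultimately show ?thesis unfolding s_def[symmetric] by linarith
qed

lemma main:
  assumes cpos: "\<forall>v\<in>V. curv E rot v > 0"
    and d0: "d0 \<in> darts E" and sig: "\<sigma> = face_of rot d0"
    and in1: "(v, w1) \<in> \<sigma>" and in2: "(v, w2) \<in> \<sigma>" and ne: "w1 \<noteq> w2"
  shows "7 \<le> card \<sigma> \<and> card \<sigma> \<le> 11"
proof -
  have Dd: "(v, w1) \<in> darts E" using face_sub d0 in1 sig by blast
  have sigD: "\<sigma> = face_of rot (v, w1)" using face_same[OF d0, of "(v, w1)"] in1 sig by simp
  define s where "s = per (v, w1)"
  have cs: "card \<sigma> = s" using sigD card_face Dd s_def by simp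
  define D where "D k = (f ^^ k) (v, w1)" for k
  have Dsuc: "D (k + 1) = (snd (D k), rot (snd (D k)) (fst (D k)))" for k
    by (simp add: D_def fnext_def)
  have DEk: "E (fst (D k)) (snd (D k))" for k
    unfolding D_def by (rule DE[OF dart_fk[OF Dd]])
  have Ds: "D s = D 0" unfolding D_def s_def using per[OF Dd] by simp
  have Dinj: "i = j" if "i < s" "j < s" "D i = D j" for i j
    using inj_onD[OF inj_per[OF Dd]] that unfolding s_def D_def by blast
  have s3: "s \<ge> 3" using per_ge3 Dd s_def by simp
  have "(v, w2) \<in> (\<lambda>k. (f ^^ k) (v, w1)) ` {..<per (v, w1)}" using in2 sigD face_eq[OF Dd] by simp
  then obtain j where j: "j < s" "D j = (v, w2)" unfolding s_def D_def by auto
  have D0: "D 0 = (v, w1)" by (simp add: D_def)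
  have vV: "v \<in> V" using inV Dd by (auto simp: darts_def)
  have Ew1: "E v w1" using Dd by (simp add: darts_def)
  have Ew2: "E v w2" using DEk[of j] j by simp
  have fc: "face_of rot (v, w2) = face_of rot (v, w1)"
  proof -
    have "(v, w2) \<in> face_of rot (v, w1)" using in2 sigD by simp
    then show ?thesis by (rule face_same[OF Dd])
  qed
  have cb: "(real (deg E v) - 2) * real s < 12"
  proof -
    have "curv E rot v > 0" using cpos vV by blast
    from curv_bound[OF this Ew1 Ew2 ne fc] show ?thesis unfolding s_def .
  qed
  have d3: "deg E v \<ge> 3" using deg3 vV by blast
  have up: "s \<le> 11"
  proof -
    have "real s \<le> (real (deg E v) - 2) * real s" using d3 by (simp add: mult_le_cancel_right1)
    then show ?thesis using cb by linarith
  qed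
  have j0: "j \<noteq> 0"
  proof
    assume "j = 0" then have "D 0 = (v, w2)" using j by simp
    then show False using D0 ne by simp
  qed
  have j1: "j \<noteq> 1"
  proof
    assume "j = 1"
    then have "fst (D 1) = v" using j by simp
    moreover have "fst (D 1) = w1" using Dsuc[of 0] D0 by (simp add: eval_nat_numeral)
    ultimately show False using Ew1 irr by simp
  qed
  have j2: "j \<noteq> 2"
  proof
    assume "j = 2"
    then have "fst (D 2) = v" using j by simp
    moreover have "fst (D 2) = snd (D 1)" using Dsuc[of 1] by (simp add: eval_nat_numeral)
    moreover have "snd (D 1) = rot w1 v" using Dsuc[of 0] D0 by (simp add: eval_nat_numeral)
    ultimately show False using fixed_contra symE Ew1 by metis
  qed
  have j3: "j \<noteq> s - 1"
  proof
    assume js: "j = s - 1"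
    have "D s = D (j + 1)" using js s3 by simp
    then have "fst (D s) = snd (D j)" using Dsuc[of j] by simp
    then show False using Ds D0 j Ew2 irr by simp
  qed
  have j4: "j \<noteq> s - 2"
  proof
    assume js: "j = s - 2"
    have "(j + 1) + 1 = s" using js s3 by simp
    then have "D s = D ((j + 1) + 1)" by simp
    then have "fst (D s) = snd (D (j + 1))" using Dsuc[of "j+1"] by simp
    moreover have "snd (D (j + 1)) = rot w2 v" using Dsuc[of j] j by simp
    ultimately have "rot w2 v = v" using Ds D0 by simp
    then show False using fixed_contra symE Ew2 by metis
  qed
  have s6: "s \<ge> 6" and j6: "s = 6 \<Longrightarrow> j = 3" using j(1) j0 j1 j2 j3 j4 by auto
  have "s \<noteq> 6"
  proof
    assume s: "s = 6"
    then have j3': "j = 3" using j6 by simp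
    define b where "b = snd (D 1)"
    define e where "e = snd (D 4)"
    have D1: "fst (D 1) = w1" using Dsuc[of 0] D0 by (simp add: eval_nat_numeral)
    have b1: "b = rot w1 v" using Dsuc[of 0] D0 b_def by (simp add: eval_nat_numeral)
    have D2: "fst (D 2) = b" using Dsuc[of 1] b_def by (simp add: eval_nat_numeral)
    have D2s: "snd (D 2) = v"
    proof -
      have "D 3 = (v, w2)" using j j3' by simp
      moreover have "D 3 = (snd (D 2), rot (snd (D 2)) (fst (D 2)))" using Dsuc[of 2] by (simp add: eval_nat_numeral)
      ultimately show ?thesis by simp
    qed
    have D3a: "D 3 = (v, w2)" using j j3' by simp
    have D3b: "D 3 = (snd (D 2), rot (snd (D 2)) (fst (D 2)))" using Dsuc[of 2] by (simp add: eval_nat_numeral)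
    have D3: "rot v b = w2" using D3a D3b D2 D2s by simp
    have D5: "fst (D 5) = e" using Dsuc[of 4] e_def by (simp add: eval_nat_numeral)
    have D6a: "D 6 = (v, w1)" using Ds D0 s by simp
    have D6b: "D 6 = (snd (D 5), rot (snd (D 5)) (fst (D 5)))" using Dsuc[of 5] by (simp add: eval_nat_numeral)
    have D5s: "snd (D 5) = v" using D6a D6b by simp
    have D6: "rot v e = w1" using D6a D6b D5 D5s by simp
    have Evb: "E v b" using DEk[of 2] D2 D2s symE by simp
    have Eve: "E v e" using DEk[of 5] D5 D5s symE by simp
    have w1b: "w1 \<noteq> b" using DEk[of 1] D1 b_def irr by auto
    have w2e: "w2 \<noteq> e"
    proof -
      have "D 3 = (v, w2)" using j j3' by simp
      moreover have "D 4 = (snd (D 3), rot (snd (D 3)) (fst (D 3)))" using Dsuc[of 3] by (simp add: eval_nat_numeral)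
      ultimately have "fst (D 4) = w2" by simp
      then show ?thesis using DEk[of 4] e_def irr by auto
    qed
    have be: "b \<noteq> e"
    proof
      assume "b = e"
      then have "D 2 = D 5" using D2 D2s D5 D5s by (simp add: prod_eq_iff)
      then show False using Dinj[of 2 5] s by simp
    qed
    have w1e: "w1 \<noteq> e" using D6 Eve fixed_contra by metis
    have bw2: "b \<noteq> w2" using D3 Evb fixed_contra by metis
    have "{w1, w2, b, e} \<subseteq> nbrs E v" using Ew1 Ew2 Evb Eve by (simp add: nbrs_def)
    moreover have "finite (nbrs E v)"
    proof -
      have "nbrs E v \<subseteq> V" using inV by (auto simp: nbrs_def)
      then show ?thesis using finV finite_subset by blast
    qed
    ultimately have "card {w1, w2, b, e} \<le> deg E v" unfolding deg_def by (rule card_mono[rotated])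
    moreover have "card {w1, w2, b, e} = 4" using ne w1b w1e bw2 w2e be by simp
    ultimately have "deg E v \<ge> 4" by simp
    then have "(real (deg E v) - 2) * real s \<ge> 12" using s by simp
    then show False using cb by simp
  qed
  then show ?thesis using cs up s6 by simp
qed

end

theorem lemma2p2:
  fixes V :: "'a set" and E :: "'a \<Rightarrow> 'a \<Rightarrow> bool" and rot :: "'a \<Rightarrow> 'a \<Rightarrow> 'a"
    and \<sigma> :: "('a \<times> 'a) set"
  assumes "planar_PCC V E rot"
    and "\<sigma> \<in> faces E rot"
    and "\<not> is_set_mset (face_verts \<sigma>) \<or> \<not> is_set_mset (face_edges \<sigma>)"
  shows "7 \<le> face_len \<sigma> \<and> face_len \<sigma> \<le> 11"
proof -
  have pg: "plane_graph V E rot" and cpos: "\<forall>v\<in>V. curv E rot v > 0"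
    and d3: "\<forall>v\<in>V. deg E v \<ge> 3" using assms(1) unfolding planar_PCC_def by auto
  have sg: "simple_graph V E" and rs: "rotation_system V E rot" using pg unfolding plane_graph_def by auto
  interpret rsys V E rot using sg rs d3 by unfold_locales
  obtain d0 where d0: "d0 \<in> darts E" and sig: "\<sigma> = face_of rot d0" using assms(2) unfolding faces_def by blast
  have "\<exists>v w1 w2. (v, w1) \<in> \<sigma> \<and> (v, w2) \<in> \<sigma> \<and> w1 \<noteq> w2"
  proof (cases "is_set_mset (face_verts \<sigma>)")
    case False
    have "\<not> inj_on fst \<sigma>"
    proof
      assume "inj_on fst \<sigma>"
      then have "face_verts \<sigma> = mset_set (fst ` \<sigma>)" unfolding face_verts_def by (rule image_mset_mset_set)
      then have "is_set_mset (face_verts \<sigma>)" unfolding is_set_mset_def by (simp add: count_mset_set')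
      with False show False by simp
    qed
    then obtain x y where xy: "x \<in> \<sigma>" "y \<in> \<sigma>" "x \<noteq> y" "fst x = fst y" unfolding inj_on_def by blast
    have i1: "(fst x, snd x) \<in> \<sigma>" using xy(1) by simp
    have e2: "(fst x, snd y) = y" using xy(4) by simp
    have i2: "(fst x, snd y) \<in> \<sigma>" using xy(2) e2 by simp
    have ne: "snd x \<noteq> snd y" using xy(3,4) by (simp add: prod_eq_iff)
    from i1 i2 ne have "(fst x, snd x) \<in> \<sigma> \<and> (fst x, snd y) \<in> \<sigma> \<and> snd x \<noteq> snd y" by blast
    then show ?thesis by blast
  next
    case True
    then have F: "\<not> is_set_mset (face_edges \<sigma>)" using assms(3) by blast
    define g :: "'a \<times> 'a \<Rightarrow> 'a set" where "g = (\<lambda>(u, v). {u, v})"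
    have "\<not> inj_on g \<sigma>"
    proof
      assume "inj_on g \<sigma>"
      then have "image_mset g (mset_set \<sigma>) = mset_set (g ` \<sigma>)" by (rule image_mset_mset_set)
      then have "face_edges \<sigma> = mset_set (g ` \<sigma>)" unfolding face_edges_def g_def by simp
      then have "is_set_mset (face_edges \<sigma>)" unfolding is_set_mset_def by (simp add: count_mset_set')
      with F show False by simp
    qed
    then obtain x y where xy: "x \<in> \<sigma>" "y \<in> \<sigma>" "x \<noteq> y" "g x = g y"
      unfolding inj_on_def by blast
    obtain p q where x: "x = (p, q)" by (cases x)
    obtain p' q' where y: "y = (p', q')" by (cases y)
    have Epq: "E p q" using face_sub[OF d0] sig xy(1) x by (auto simp: darts_def)
    have "{p, q} = {p', q'}" using xy(4) unfolding x y g_def by simp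
    then have "p = p' \<and> q = q' \<or> p = q' \<and> q = p'" by (simp only: doubleton_eq_iff)
    moreover have "\<not> (p = p' \<and> q = q')" using xy(3) x y by simp
    ultimately have "p' = q \<and> q' = p" by blast
    then have qp: "(q, p) \<in> \<sigma>" using xy(2) y by simp
    then obtain k where k: "(q, p) = (f ^^ k) d0" using sig by (auto simp: face_of_def)
    have "f (q, p) = (f ^^ Suc k) d0" using k by simp
    then have "f (q, p) \<in> \<sigma>" using sig unfolding face_of_def by (metis rangeI)
    then have in2: "(p, rot p q) \<in> \<sigma>" by (simp add: fnext_def)
    have in1: "(p, q) \<in> \<sigma>" using xy(1) x by simp
    have "rot p q \<noteq> q" using fixed_contra Epq by blast
    then show ?thesis using in1 in2 by blast
  qed
  then obtain v w1 w2 where "(v, w1) \<in> \<sigma>" "(v, w2) \<in> \<sigma>" "w1 \<noteq> w2" by blast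
  from main[OF cpos d0 sig this] show ?thesis unfolding face_len_def .
qed

end
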